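(* For any set $\mathcal H$ of Pauli operators in $\mathcal P_n$, $\mathrm{rank}\,D^{(\mathcal H)}=\mathrm{rank}\,A^{(\mathcal H)}$.
   Context: $\mathcal P_n$ is the $n$-qubit Pauli group without phases; $\langle A,B\rangle=0$ if $A,B$ commute and $1$ otherwise. $\Gamma$ is a finite collection of supports $\gamma\subseteq\{1,\dots,n\}$; $\mathcal E_\gamma$ is the set of non-identity Paulis supported in $\gamma$, and $\mathcal E_\Gamma$ is the disjoint union of the $\mathcal E_\gamma$ (each element $e$ labeled by its support $\gamma_e$). For $h\in\mathcal P_n$, $h_\gamma$ is the restriction of $h$ to $\gamma$ (identity outside $\gamma$). $A^{(\mathcal H)}$ is the $|\mathcal H|\times|\mathcal E_\Gamma|$ matrix with $A^{(\mathcal H)}[h,e]=1$ if $h_{\gamma_e}=e$ and $0$ otherwise. $D^{(\mathcal H)}$ is the $|\mathcal H|\times|\mathcal E_\Gamma|$ matrix with $D^{(\mathcal H)}[h,e]=\langle h,e\rangle$. *)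

theory Defs
  imports Complex_Main "Jordan_Normal_Form.DL_Rank"
begin

(* Single-qubit Pauli operators, phases ignored. *)
datatype pauli1 = PI | PX | PY | PZ

(* An n-qubit Pauli (without phase): a map from qubit index to single-qubit Pauli;
   qubits are 1..n, identity outside. *)
type_synonym pauli = "nat \<Rightarrow> pauli1"

definition paulis :: "nat \<Rightarrow> pauli set" where
  "paulis n = {p. \<forall>i. i \<notin> {1..n} \<longrightarrow> p i = PI}"

definition pauli_id :: pauli where "pauli_id = (\<lambda>_. PI)"

definition supp :: "pauli \<Rightarrow> nat set" where
  "supp p = {i. p i \<noteq> PI}"

definition anticomm1 :: "pauli1 \<Rightarrow> pauli1 \<Rightarrow> bool" where
  "anticomm1 a b \<longleftrightarrow> a \<noteq> PI \<and> b \<noteq> PI \<and> a \<noteq> b"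

(* symplectic form <A,B>: 0 if A,B commute, 1 otherwise *)
definition symp :: "pauli \<Rightarrow> pauli \<Rightarrow> real" where
  "symp A B = (if even (card {i. anticomm1 (A i) (B i)}) then 0 else 1)"

definition restrict_to :: "pauli \<Rightarrow> nat set \<Rightarrow> pauli" where
  "restrict_to h \<gamma> = (\<lambda>i. if i \<in> \<gamma> then h i else PI)"

definition E_supp :: "nat set \<Rightarrow> pauli set" where
  "E_supp \<gamma> = {e. e \<noteq> pauli_id \<and> supp e \<subseteq> \<gamma>}"

(* E_Gamma: disjoint union, each element labelled by its support gamma *)
definition E_Gamma :: "nat set set \<Rightarrow> (nat set \<times> pauli) set" where
  "E_Gamma \<Gamma> = (SIGMA \<gamma>:\<Gamma>. E_supp \<gamma>)"

(* Enumerate a finite set as a list (order irrelevant for rank). *)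
definition enum_set :: "'a set \<Rightarrow> 'a list" where
  "enum_set S = (SOME xs. distinct xs \<and> set xs = S)"

definition mat_of_fun :: "'r set \<Rightarrow> 'c set \<Rightarrow> ('r \<Rightarrow> 'c \<Rightarrow> 'a) \<Rightarrow> 'a mat" where
  "mat_of_fun R C f =
     (let rs = enum_set R; cs = enum_set C
      in mat (length rs) (length cs) (\<lambda>(i, j). f (rs ! i) (cs ! j)))"

definition A_mat :: "pauli set \<Rightarrow> nat set set \<Rightarrow> real mat" where
  "A_mat H \<Gamma> = mat_of_fun H (E_Gamma \<Gamma>)
     (\<lambda>h (\<gamma>, e). if restrict_to h \<gamma> = e then 1 else 0)"

definition D_mat :: "pauli set \<Rightarrow> nat set set \<Rightarrow> real mat" where
  "D_mat H \<Gamma> = mat_of_fun H (E_Gamma \<Gamma>) (\<lambda>h (\<gamma>, e). symp h e)"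

definition mat_rank :: "real mat \<Rightarrow> nat" where
  "mat_rank M = vec_space.rank (dim_row M) M"

end

theory Submission
  imports Defs
begin

lemma enum_set_props:
  assumes "finite S" shows "distinct (enum_set S) \<and> set (enum_set S) = S"
  unfolding enum_set_def
  by (rule someI_ex) (use finite_distinct_list[OF assms] in blast)

lemma sum_enum:
  assumes "finite S"
  shows "(\<Sum>k\<in>{0..<length (enum_set S)}. F (enum_set S ! k)) = (\<Sum>x\<in>S. F x)"
proof -
  have b: "bij_betw ((!) (enum_set S)) {..<length (enum_set S)} S"
    by (rule bij_betw_nth) (use enum_set_props[OF assms] in auto)
  show ?thesis using sum.reindex_bij_betw[OF b, of F] by (simp add: atLeast0LessThan)
qed

lemma mat_of_fun_mult:
  assumes "finite R" "finite K" "finite C"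
    and "\<And>r c. r \<in> R \<Longrightarrow> c \<in> C \<Longrightarrow> h r c = (\<Sum>k\<in>K. f r k * g k c)"
  shows "mat_of_fun R C h = mat_of_fun R K f * mat_of_fun K C (g :: _ \<Rightarrow> _ \<Rightarrow> 'a::comm_ring_1)"
proof (rule eq_matI)
  fix i j assume i: "i < dim_row (mat_of_fun R K f * mat_of_fun K C g)"
    and j: "j < dim_col (mat_of_fun R K f * mat_of_fun K C g)"
  have iR: "i < length (enum_set R)" and jC: "j < length (enum_set C)"
    using i j by (auto simp: mat_of_fun_def Let_def)
  have r: "enum_set R ! i \<in> R" using iR enum_set_props[OF assms(1)] nth_mem by blast
  have c: "enum_set C ! j \<in> C" using jC enum_set_props[OF assms(3)] nth_mem by blast
  show "mat_of_fun R C h $$ (i, j) = (mat_of_fun R K f * mat_of_fun K C g) $$ (i, j)"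
    using iR jC
    by (simp add: mat_of_fun_def Let_def scalar_prod_def assms(4)[OF r c]
        sum_enum[OF assms(2), of "\<lambda>k. f (enum_set R ! i) k * g k (enum_set C ! j)"])
qed (auto simp: mat_of_fun_def Let_def)

lemma rank_eq_mult:
  assumes "A \<in> carrier_mat nr k" "D \<in> carrier_mat nr k" "M \<in> carrier_mat k k" "M' \<in> carrier_mat k k"
    "D = A * M" "A = D * M'"
  shows "vec_space.rank nr D = vec_space.rank nr (A :: 'a::field mat)"
proof -
  have "vec_space.col_space nr D = vec_space.col_space nr A"
  proof -
    have 1: "vec_space.col_space nr D \<subseteq> vec_space.col_space nr A" 
      if t1: "A \<in> carrier_mat nr k" and t2: "D \<in> carrier_mat nr k" and t3: "M \<in> carrier_mat k k" and t4: "D = A * M" for A D M :: "'a mat"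
    proof
      fix y assume "y \<in> vec_space.col_space nr D"
      then obtain x where x: "x \<in> carrier_vec k" "y = D *\<^sub>v x" "y \<in> carrier_vec nr"
        using vec_space.col_space_eq[OF t2] t1 t2 t3 t4 by auto
      have "y = A *\<^sub>v (M *\<^sub>v x)" using x t1 t3 t4 by (simp add: assoc_mult_mat_vec)
      moreover have "M *\<^sub>v x \<in> carrier_vec k" using t3 x by auto
      ultimately show "y \<in> vec_space.col_space nr A"
        using vec_space.col_space_eq[OF t1] t1 x by auto
    qed
    have a: "vec_space.col_space nr D \<subseteq> vec_space.col_space nr A" by (rule 1[OF assms(1,2,3,5)])
    have b: "vec_space.col_space nr A \<subseteq> vec_space.col_space nr D" by (rule 1[OF assms(2,1,4,6)])
    show ?thesis using a b by (rule subset_antisym)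
  qed
  then show ?thesis unfolding vec_space.rank_def vec_space.col_space_def by simp
qed

definition Pset :: "nat set \<Rightarrow> pauli set" where "Pset \<gamma> = {e. \<forall>j. j \<notin> \<gamma> \<longrightarrow> e j = PI}"
definition chi1 :: "pauli1 \<Rightarrow> pauli1 \<Rightarrow> real" where "chi1 a b = (if anticomm1 a b then -1 else 1)"

lemma UNIV_pauli1: "(UNIV :: pauli1 set) = {PI, PX, PY, PZ}"
  using pauli1.exhaust by auto

lemma Pset_empty: "Pset {} = {\<lambda>_. PI}"
  by (auto simp: Pset_def)

lemma Pset_insert: "i \<notin> \<gamma> \<Longrightarrow> Pset (insert i \<gamma>) = (\<lambda>(a,e). e(i:=a)) ` (UNIV \<times> Pset \<gamma>)"
proof (intro equalityI subsetI)
  fix x assume "i \<notin> \<gamma>" "x \<in> Pset (insert i \<gamma>)"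
  then have "x = (\<lambda>(a,e). e(i:=a)) (x i, x(i:=PI))" "(x i, x(i:=PI)) \<in> UNIV \<times> Pset \<gamma>"
    by (auto simp: Pset_def)
  then show "x \<in> (\<lambda>(a,e). e(i:=a)) ` (UNIV \<times> Pset \<gamma>)" by blast
qed (auto simp: Pset_def)

lemma Pset_inj: "i \<notin> \<gamma> \<Longrightarrow> inj_on (\<lambda>(a,e). e(i:=a)) (UNIV \<times> Pset \<gamma>)"
proof (rule inj_onI, clarify)
  fix a e b f assume i: "i \<notin> \<gamma>" and ef: "e \<in> Pset \<gamma>" "f \<in> Pset \<gamma>" and eq: "e(i := a) = f(i := b)"
  have "a = b" using fun_cong[OF eq, of i] by simp
  moreover have "e = f"
  proof
    fix j show "e j = f j" using fun_cong[OF eq, of j] i ef by (cases "j = i") (auto simp: Pset_def)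
  qed
  ultimately show "a = b \<and> e = f" by simp
qed

lemma finite_Pset: "finite \<gamma> \<Longrightarrow> finite (Pset \<gamma>)"
proof (induction rule: finite_induct)
  case empty then show ?case by (simp add: Pset_empty)
next
  case (insert i \<gamma>)
  have "finite ((UNIV :: pauli1 set) \<times> Pset \<gamma>)" by (rule finite_cartesian_product) (simp_all add: UNIV_pauli1 insert.IH)
  then show ?case using insert by (simp add: Pset_insert)
qed

lemma sum_prod_Pset:
  "finite \<gamma> \<Longrightarrow> (\<Sum>e\<in>Pset \<gamma>. \<Prod>j\<in>\<gamma>. F j (e j)) = (\<Prod>j\<in>\<gamma>. \<Sum>a\<in>UNIV. (F j a :: real))"
proof (induction rule: finite_induct)
  case empty then show ?case by (simp add: Pset_empty)
next
  case (insert i \<gamma>)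
  have "(\<Sum>e\<in>Pset (insert i \<gamma>). \<Prod>j\<in>insert i \<gamma>. F j (e j))
      = (\<Sum>p\<in>UNIV \<times> Pset \<gamma>. (\<lambda>e. \<Prod>j\<in>insert i \<gamma>. F j (e j)) ((\<lambda>(a,e). e(i:=a)) p))"
    using insert by (simp add: Pset_insert sum.reindex[OF Pset_inj])
  also have "\<dots> = (\<Sum>a\<in>UNIV. \<Sum>e\<in>Pset \<gamma>. F i a * (\<Prod>j\<in>\<gamma>. F j (e j)))"
  proof -
    have "\<And>a e. (\<Prod>j\<in>insert i \<gamma>. F j ((e(i:=a)) j)) = F i a * (\<Prod>j\<in>\<gamma>. F j (e j))"
    proof -
      fix a e
      have "(\<Prod>j\<in>\<gamma>. F j ((e(i:=a)) j)) = (\<Prod>j\<in>\<gamma>. F j (e j))"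
        by (rule prod.cong) (use insert in auto)
      then show "(\<Prod>j\<in>insert i \<gamma>. F j ((e(i:=a)) j)) = F i a * (\<Prod>j\<in>\<gamma>. F j (e j))"
        using insert by simp
    qed
    then show ?thesis
      unfolding sum.cartesian_product' by (intro sum.cong refl) simp
  qed
  also have "\<dots> = (\<Sum>a\<in>UNIV. F i a) * (\<Sum>e\<in>Pset \<gamma>. \<Prod>j\<in>\<gamma>. F j (e j))"
    unfolding sum_distrib_right by (simp add: sum_distrib_left)
  also have "\<dots> = (\<Prod>j\<in>insert i \<gamma>. \<Sum>a\<in>UNIV. F j a)"
    using insert by simp
  finally show ?case .
qed

lemma symp_prod:
  assumes "finite \<gamma>" "\<forall>j. j \<notin> \<gamma> \<longrightarrow> b j = PI"
  shows "1 - 2 * symp a b = (\<Prod>j\<in>\<gamma>. chi1 (a j) (b j))"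
proof -
  have S: "{i. anticomm1 (a i) (b i)} = \<gamma> \<inter> {j. anticomm1 (a j) (b j)}"
    using assms(2) by (auto simp: anticomm1_def)
  have "(\<Prod>j\<in>\<gamma>. chi1 (a j) (b j)) = (\<Prod>j\<in>\<gamma>. if anticomm1 (a j) (b j) then -1 else 1)"
    by (simp add: chi1_def)
  also have "\<dots> = (\<Prod>j\<in>\<gamma> \<inter> {j. anticomm1 (a j) (b j)}. -1) * (\<Prod>j\<in>\<gamma> \<inter> - {j. anticomm1 (a j) (b j)}. 1)"
    by (rule prod.If_cases[OF assms(1)])
  also have "\<dots> = (-1) ^ card (\<gamma> \<inter> {j. anticomm1 (a j) (b j)})"
    by simp
  finally have *: "(\<Prod>j\<in>\<gamma>. chi1 (a j) (b j)) = (-1) ^ card (\<gamma> \<inter> {j. anticomm1 (a j) (b j)})" .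
  have **: "card {i. anticomm1 (a i) (b i)} = card (\<gamma> \<inter> {j. anticomm1 (a j) (b j)})"
    by (rule arg_cong[OF S])
  show ?thesis
    unfolding symp_def * ** by (cases "even (card (\<gamma> \<inter> {j. anticomm1 (a j) (b j)}))") auto
qed

lemma chi1_orth: "(\<Sum>a\<in>UNIV. chi1 x a * chi1 y a) = (if x = y then 4 else 0)"
  by (cases x; cases y) (simp_all add: UNIV_pauli1 chi1_def anticomm1_def)

lemma orth:
  assumes "finite \<gamma>" "supp g \<subseteq> \<gamma>" "supp f \<subseteq> \<gamma>"
  shows "(\<Sum>e\<in>Pset \<gamma>. (1 - 2 * symp g e) * (1 - 2 * symp f e)) = (if g = f then 4 ^ card \<gamma> else 0)"
proof -
  have "(\<Sum>e\<in>Pset \<gamma>. (1 - 2 * symp g e) * (1 - 2 * symp f e))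
      = (\<Sum>e\<in>Pset \<gamma>. \<Prod>j\<in>\<gamma>. chi1 (g j) (e j) * chi1 (f j) (e j))"
    by (rule sum.cong) (auto simp: symp_prod[OF assms(1)] Pset_def prod.distrib)
  also have "\<dots> = (\<Prod>j\<in>\<gamma>. if g j = f j then 4 else 0)"
    by (subst sum_prod_Pset[OF assms(1), of "\<lambda>j a. chi1 (g j) a * chi1 (f j) a"]) (simp add: chi1_orth)
  also have "\<dots> = (if g = f then 4 ^ card \<gamma> else 0)"
  proof (cases "\<forall>j\<in>\<gamma>. g j = f j")
    case True
    have "g = f"
    proof
      fix x show "g x = f x"
      proof (cases "x \<in> \<gamma>")
        case True2: True
        then show ?thesis using True by blast
      next
        case False
        then have "g x = PI" "f x = PI" using assms(2,3) unfolding supp_def by blast+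
        then show ?thesis by simp
      qed
    qed
    then show ?thesis by simp
  next
    case False
    then have "g \<noteq> f" by auto
    then show ?thesis using False assms(1) by (auto simp: prod_zero_iff)
  qed
  finally show ?thesis .
qed

lemma symp_id: "symp a pauli_id = 0" "symp pauli_id a = 0"
  by (simp_all add: symp_def pauli_id_def anticomm1_def)

lemma symp_sym: "symp a b = symp b a"
  unfolding symp_def anticomm1_def by metis

lemma E_supp_Pset: "E_supp \<gamma> = Pset \<gamma> - {pauli_id}"
  by (auto simp: E_supp_def Pset_def supp_def)

lemma core:
  assumes "finite \<gamma>" "supp g \<subseteq> \<gamma>" "f \<in> E_supp \<gamma>"
  shows "(\<Sum>e\<in>E_supp \<gamma>. symp g e * (4 * symp e f - 2)) = (if g = f then 4 ^ card \<gamma> else 0)"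
proof -
  have fP: "supp f \<subseteq> \<gamma>" "f \<noteq> pauli_id" using assms(3) by (auto simp: E_supp_def)
  have idP: "pauli_id \<in> Pset \<gamma>" "supp pauli_id \<subseteq> \<gamma>" by (auto simp: Pset_def pauli_id_def supp_def)
  have "(\<Sum>e\<in>E_supp \<gamma>. symp g e * (4 * symp e f - 2)) = (\<Sum>e\<in>Pset \<gamma>. symp g e * (4 * symp e f - 2))"
    unfolding E_supp_Pset using finite_Pset[OF assms(1)] idP
    by (simp add: sum_diff1 symp_id)
  also have "\<dots> = (\<Sum>e\<in>Pset \<gamma>. (1 - 2 * symp g e) * (1 - 2 * symp f e))
       - (\<Sum>e\<in>Pset \<gamma>. (1 - 2 * symp pauli_id e) * (1 - 2 * symp f e))"
    by (simp add: sum_subtractf[symmetric] symp_id symp_sym[of _ f] algebra_simps)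
  also have "\<dots> = (if g = f then 4 ^ card \<gamma> else 0)"
    using orth[OF assms(1) assms(2) fP(1)] orth[OF assms(1) idP(2) fP(1)] fP(2) by simp
  finally show ?thesis .
qed

lemma sum_Sigma_delta:
  assumes "finite \<Gamma>" "\<forall>x\<in>\<Gamma>. finite (B x)" "\<gamma> \<in> \<Gamma>"
  shows "(\<Sum>(x,e)\<in>Sigma \<Gamma> B. (if x = \<gamma> then G e else (0::real))) = (\<Sum>e\<in>B \<gamma>. G e)"
proof -
  have "(\<Sum>(x,e)\<in>Sigma \<Gamma> B. (if x = \<gamma> then G e else (0::real))) = (\<Sum>x\<in>\<Gamma>. \<Sum>e\<in>B x. if x = \<gamma> then G e else 0)"
    by (rule sum.Sigma[symmetric]) (use assms in auto)
  also have "\<dots> = (\<Sum>x\<in>\<Gamma>. if x = \<gamma> then (\<Sum>e\<in>B x. G e) else 0)"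
    by (rule sum.cong) auto
  also have "\<dots> = (\<Sum>e\<in>B \<gamma>. G e)"
    using assms by (simp add: sum.delta')
  finally show ?thesis .
qed

lemma supp_restrict: "supp (restrict_to h \<gamma>) \<subseteq> \<gamma>"
  by (auto simp: supp_def restrict_to_def)

lemma symp_restrict:
  assumes "supp f \<subseteq> \<gamma>"
  shows "symp (restrict_to h \<gamma>) f = symp h f"
proof -
  have "{i. anticomm1 (restrict_to h \<gamma> i) (f i)} = {i. anticomm1 (h i) (f i)}"
    using assms by (auto simp: restrict_to_def anticomm1_def supp_def)
  then show ?thesis unfolding symp_def by simp
qed

theorem lemma2:
  fixes n :: nat and \<Gamma> :: "nat set set" and H :: "pauli set"
  assumes "finite \<Gamma>"
    and "\<forall>\<gamma>\<in>\<Gamma>. \<gamma> \<subseteq> {1..n}"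
    and "H \<subseteq> paulis n"
  shows "mat_rank (D_mat H \<Gamma>) = mat_rank (A_mat H \<Gamma>)"
proof -
  have finG: "\<And>\<gamma>. \<gamma> \<in> \<Gamma> \<Longrightarrow> finite \<gamma>"
    using assms(2) finite_subset[OF _ finite_atLeastAtMost] by blast
  have finS: "\<forall>\<gamma>\<in>\<Gamma>. finite (E_supp \<gamma>)"
    using finG finite_Pset E_supp_Pset by simp
  define E where "E = E_Gamma \<Gamma>"
  have finE: "finite E" unfolding E_def E_Gamma_def using assms(1) finS by (simp add: finite_SigmaI)
  have "paulis n = Pset {1..n}" by (auto simp: paulis_def Pset_def)
  then have finH: "finite H" using assms(3) finite_Pset[of "{1..n}"] finite_subset by auto
  define M :: "nat set \<times> pauli \<Rightarrow> nat set \<times> pauli \<Rightarrow> real"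
    where "M = (\<lambda>(\<gamma>,e) (\<gamma>',f). if \<gamma> = \<gamma>' then symp e f else 0)"
  define M' :: "nat set \<times> pauli \<Rightarrow> nat set \<times> pauli \<Rightarrow> real"
    where "M' = (\<lambda>(\<gamma>,e) (\<gamma>',f). if \<gamma> = \<gamma>' then (4 * symp e f - 2) / 4 ^ card \<gamma> else 0)"
  have D1: "D_mat H \<Gamma> = A_mat H \<Gamma> * mat_of_fun E E M"
    unfolding D_mat_def A_mat_def E_def[symmetric]
  proof (rule mat_of_fun_mult[OF finH finE finE])
    fix h c assume h: "h \<in> H" and c: "c \<in> E"
    obtain \<gamma> f where cf: "c = (\<gamma>, f)" "\<gamma> \<in> \<Gamma>" "f \<in> E_supp \<gamma>"
      using c unfolding E_def E_Gamma_def by auto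
    have fs: "supp f \<subseteq> \<gamma>" using cf by (auto simp: E_supp_def)
    have "(\<Sum>k\<in>E. (case k of (\<gamma>', e) \<Rightarrow> if restrict_to h \<gamma>' = e then 1 else 0) * M k c)
        = (\<Sum>(x,e)\<in>Sigma \<Gamma> E_supp. (if x = \<gamma> then (if restrict_to h \<gamma> = e then 1 else 0) * symp e f else 0))"
      unfolding E_def E_Gamma_def by (rule sum.cong) (auto simp: M_def cf)
    also have "\<dots> = (\<Sum>e\<in>E_supp \<gamma>. (if restrict_to h \<gamma> = e then 1 else 0) * symp e f)"
      by (rule sum_Sigma_delta[OF assms(1) finS cf(2)])
    also have "\<dots> = (\<Sum>e\<in>E_supp \<gamma>. if restrict_to h \<gamma> = e then symp e f else 0)"
      by (rule sum.cong) auto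
    also have "\<dots> = (if restrict_to h \<gamma> \<in> E_supp \<gamma> then symp (restrict_to h \<gamma>) f else 0)"
      using finS cf(2) by (simp add: sum.delta)
    also have "\<dots> = symp h f"
    proof (cases "restrict_to h \<gamma> \<in> E_supp \<gamma>")
      case True then show ?thesis using symp_restrict[OF fs] by simp
    next
      case False
      then have "restrict_to h \<gamma> = pauli_id" using supp_restrict[of h \<gamma>] by (auto simp: E_supp_def)
      then show ?thesis using False symp_restrict[OF fs, of h] symp_id by simp
    qed
    finally show "(case c of (\<gamma>, e) \<Rightarrow> symp h e) =
        (\<Sum>k\<in>E. (case k of (\<gamma>, e) \<Rightarrow> if restrict_to h \<gamma> = e then 1 else 0) * M k c)"
      using cf by simp
  qed
  have A1: "A_mat H \<Gamma> = D_mat H \<Gamma> * mat_of_fun E E M'"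
    unfolding D_mat_def A_mat_def E_def[symmetric]
  proof (rule mat_of_fun_mult[OF finH finE finE])
    fix h c assume h: "h \<in> H" and c: "c \<in> E"
    obtain \<gamma> f where cf: "c = (\<gamma>, f)" "\<gamma> \<in> \<Gamma>" "f \<in> E_supp \<gamma>"
      using c unfolding E_def E_Gamma_def by auto
    have "(\<Sum>k\<in>E. (case k of (\<gamma>', e) \<Rightarrow> symp h e) * M' k c)
        = (\<Sum>(x,e)\<in>Sigma \<Gamma> E_supp. (if x = \<gamma> then symp h e * ((4 * symp e f - 2) / 4 ^ card \<gamma>) else 0))"
      unfolding E_def E_Gamma_def by (rule sum.cong) (auto simp: M'_def cf)
    also have "\<dots> = (\<Sum>e\<in>E_supp \<gamma>. symp h e * ((4 * symp e f - 2) / 4 ^ card \<gamma>))"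
      by (rule sum_Sigma_delta[OF assms(1) finS cf(2)])
    also have "\<dots> = (\<Sum>e\<in>E_supp \<gamma>. symp (restrict_to h \<gamma>) e * (4 * symp e f - 2)) / 4 ^ card \<gamma>"
      unfolding sum_divide_distrib
      by (rule sum.cong) (auto simp: symp_restrict E_supp_def)
    also have "\<dots> = (if restrict_to h \<gamma> = f then 1 else 0)"
      using core[OF finG[OF cf(2)] supp_restrict cf(3)] by simp
    finally show "(case c of (\<gamma>, e) \<Rightarrow> if restrict_to h \<gamma> = e then 1 else 0) =
        (\<Sum>k\<in>E. (case k of (\<gamma>, e) \<Rightarrow> symp h e) * M' k c)"
      using cf by simp
  qed
  let ?r = "length (enum_set H)" and ?k = "length (enum_set E)"
  have cA: "A_mat H \<Gamma> \<in> carrier_mat ?r ?k" and cD: "D_mat H \<Gamma> \<in> carrier_mat ?r ?k"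
    and cM: "mat_of_fun E E M \<in> carrier_mat ?k ?k" and cM': "mat_of_fun E E M' \<in> carrier_mat ?k ?k"
    by (auto simp: A_mat_def D_mat_def E_def mat_of_fun_def Let_def)
  have "vec_space.rank ?r (D_mat H \<Gamma>) = vec_space.rank ?r (A_mat H \<Gamma>)"
    by (rule rank_eq_mult[OF cA cD cM cM' D1 A1])
  moreover have "dim_row (D_mat H \<Gamma>) = ?r" "dim_row (A_mat H \<Gamma>) = ?r" using cA cD by auto
  ultimately show ?thesis unfolding mat_rank_def by simp
qed

end
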